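(* Under the setting described in the context, let $m^*$ be a Nash equilibrium. Then for every $i\in\mathcal N$ and $j\in\mathcal R_i$, ${}^i\pi^*_j\big({}^ia^*_j-{}^{i^+}a^*_j\big)^2=0$ and ${}^{i^+}\pi^*_j\big({}^{i^+}a^*_j-{}^{i^{++}}a^*_j\big)^2=0$ (where $m^*_k=({}^ka^*_{\mathcal R_k},{}^k\pi^*_{\mathcal R_k})$). Consequently, for every $i\in\mathcal N$, $\hat t_i(m^* )=\sum_{j\in\mathcal R_i}l_{ij}(m^* )\,\hat a_j(m^* )$.
   Context: Let $N\ge 1$ and $\mathcal N=\{1,\dots,N\}$. For each $i\in\mathcal N$ a set $\mathcal R_i\subseteq\mathcal N$ with $i\in\mathcal R_i$ is given; for $j\in\mathcal N$ put $\mathcal C_j=\{k\in\mathcal N: j\in\mathcal R_k\}$, and assume $|\mathcal C_j|\ge 3$ for all $j$. Each $\mathcal A_i\subset\mathbb R$ is a nonempty convex compact set with $0\in\mathcal A_i$. For each $i$, $u_i:\mathbb R^{\mathcal R_i}\to\mathbb R\cup\{-\infty\}$ is concave, real-valued whenever $a_i\in\mathcal A_i$, and $-\infty$ whenever $a_i\notin\mathcal A_i$. Aggregate utility: $u_i^A(a_{\mathcal R_i},t_i)=-t_i+u_i(a_{\mathcal R_i})$ if $a_i\in\mathcal A_i$, else $-\infty$. Game form: message $m_i=({}^ia_{\mathcal R_i},{}^i\pi_{\mathcal R_i})\in\mathcal M_i=\mathbb R^{\mathcal R_i}\times\mathbb R_+^{\mathcal R_i}$; $\hat a_i(m)=\frac1{|\mathcal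 C_i|}\sum_{k\in\mathcal C_i}{}^ka_i$. For each $j$ fix a bijection $\mathcal I_{\cdot j}:\mathcal C_j\to\{1,\dots,|\mathcal C_j|\}$, write $\mathcal C_{j(k)}$ for the user with index $k$ in $\mathcal C_j$, indices cyclic modulo $|\mathcal C_j|$. For $i\in\mathcal N$, $j\in\mathcal R_i$ let $i^+=\mathcal C_{j(\mathcal I_{ij}+1)}$, $i^{++}=\mathcal C_{j(\mathcal I_{ij}+2)}$, $l_{ij}(m)={}^{i^+}\pi_j-{}^{i^{++}}\pi_j$, and $\hat t_i(m)=\sum_{j\in\mathcal R_i}\Big[l_{ij}(m)\hat a_j(m)+{}^i\pi_j({}^ia_j-{}^{i^+}a_j)^2-{}^{i^+}\pi_j({}^{i^+}a_j-{}^{i^{++}}a_j)^2\Big]$. A Nash equilibrium is $m^*$ such that for all $i$ and $m_i\in\mathcal M_i$, $u_i^A\big((\hat a_j(m^* ))_{j\in\mathcal R_i},\hat t_i(m^* )\big)\ge u_i^A\big((\hat a_j(m_i,m^*_{-i}))_{j\in\mathcal R_i},\hat t_i(m_i,m^*_{-i})\big)$. *)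

theory Defs
  imports "HOL-Analysis.Analysis"
begin

text \<open>Users are 1..N. A message profile m is a pair (ma, mp) where
  ma k j = the proposed action of user k for user j and
  mp k j = the price announced by user k for user j (only j in R k matters).\<close>

definition Cset :: "nat \<Rightarrow> (nat \<Rightarrow> nat set) \<Rightarrow> nat \<Rightarrow> nat set" where
  "Cset N R j = {k \<in> {1..N}. j \<in> R k}"

definition ahat :: "nat \<Rightarrow> (nat \<Rightarrow> nat set) \<Rightarrow> (nat \<Rightarrow> nat \<Rightarrow> real) \<Rightarrow> nat \<Rightarrow> real" where
  "ahat N R ma j = (\<Sum>k\<in>Cset N R j. ma k j) / real (card (Cset N R j))"

definition cyc :: "nat \<Rightarrow> nat \<Rightarrow> nat" where
  "cyc n k = (k - 1) mod n + 1"

text \<open>C_{j(k)}: the user with index k (cyclically) in C_j\<close>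
definition member_at :: "nat \<Rightarrow> (nat \<Rightarrow> nat set) \<Rightarrow> (nat \<Rightarrow> nat \<Rightarrow> nat) \<Rightarrow> nat \<Rightarrow> nat \<Rightarrow> nat" where
  "member_at N R I j k = (THE i. i \<in> Cset N R j \<and> I i j = cyc (card (Cset N R j)) k)"

definition nxt :: "nat \<Rightarrow> (nat \<Rightarrow> nat set) \<Rightarrow> (nat \<Rightarrow> nat \<Rightarrow> nat) \<Rightarrow> nat \<Rightarrow> nat \<Rightarrow> nat" where
  "nxt N R I i j = member_at N R I j (I i j + 1)"

definition nxt2 :: "nat \<Rightarrow> (nat \<Rightarrow> nat set) \<Rightarrow> (nat \<Rightarrow> nat \<Rightarrow> nat) \<Rightarrow> nat \<Rightarrow> nat \<Rightarrow> nat" where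
  "nxt2 N R I i j = member_at N R I j (I i j + 2)"

definition lij :: "nat \<Rightarrow> (nat \<Rightarrow> nat set) \<Rightarrow> (nat \<Rightarrow> nat \<Rightarrow> nat) \<Rightarrow> (nat \<Rightarrow> nat \<Rightarrow> real) \<Rightarrow> nat \<Rightarrow> nat \<Rightarrow> real" where
  "lij N R I mp i j = mp (nxt N R I i j) j - mp (nxt2 N R I i j) j"

definition that :: "nat \<Rightarrow> (nat \<Rightarrow> nat set) \<Rightarrow> (nat \<Rightarrow> nat \<Rightarrow> nat) \<Rightarrow> (nat \<Rightarrow> nat \<Rightarrow> real) \<Rightarrow> (nat \<Rightarrow> nat \<Rightarrow> real) \<Rightarrow> nat \<Rightarrow> real" where
  "that N R I ma mp i =
     (\<Sum>j\<in>R i. lij N R I mp i j * ahat N R ma j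
        + mp i j * (ma i j - ma (nxt N R I i j) j)^2
        - mp (nxt N R I i j) j * (ma (nxt N R I i j) j - ma (nxt2 N R I i j) j)^2)"

definition uA :: "(nat \<Rightarrow> real set) \<Rightarrow> (nat \<Rightarrow> (nat \<Rightarrow> real) \<Rightarrow> real) \<Rightarrow> nat \<Rightarrow> (nat \<Rightarrow> real) \<Rightarrow> real \<Rightarrow> ereal" where
  "uA A u i a t = (if a i \<in> A i then ereal (- t + u i a) else -\<infinity>)"

definition concave_fun_on :: "(nat \<Rightarrow> real) set \<Rightarrow> ((nat \<Rightarrow> real) \<Rightarrow> real) \<Rightarrow> bool" where
  "concave_fun_on D f = (\<forall>x\<in>D. \<forall>y\<in>D. \<forall>\<theta>::real. 0 \<le> \<theta> \<and> \<theta> \<le> 1 \<longrightarrow>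
      \<theta> * f x + (1 - \<theta>) * f y \<le> f (\<lambda>k. \<theta> * x k + (1 - \<theta>) * y k))"

definition msg_ok :: "(nat \<Rightarrow> nat set) \<Rightarrow> nat \<Rightarrow> (nat \<Rightarrow> real) \<Rightarrow> bool" where
  "msg_ok R i p = (\<forall>j\<in>R i. 0 \<le> p j)"

definition is_NE :: "nat \<Rightarrow> (nat \<Rightarrow> nat set) \<Rightarrow> (nat \<Rightarrow> nat \<Rightarrow> nat) \<Rightarrow> (nat \<Rightarrow> real set)
    \<Rightarrow> (nat \<Rightarrow> (nat \<Rightarrow> real) \<Rightarrow> real) \<Rightarrow> (nat \<Rightarrow> nat \<Rightarrow> real) \<Rightarrow> (nat \<Rightarrow> nat \<Rightarrow> real) \<Rightarrow> bool" where
  "is_NE N R I A u ma mp =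
     ((\<forall>k\<in>{1..N}. msg_ok R k (mp k)) \<and>
      (\<forall>i\<in>{1..N}. \<forall>a' p'. msg_ok R i p' \<longrightarrow>
         uA A u i (ahat N R (ma(i := a'))) (that N R I (ma(i := a')) (mp(i := p')) i)
           \<le> uA A u i (ahat N R ma) (that N R I ma mp i)))"

end

theory Submission imports Defs begin

lemma Cset_fin: "finite (Cset N R j)"
  unfolding Cset_def by auto

lemma cyc_range: "c > 0 \<Longrightarrow> cyc c k \<in> {1..c}"
  unfolding cyc_def by (auto simp: Suc_leI)

lemma cyc_ne1: "c \<ge> 2 \<Longrightarrow> x \<in> {1..c} \<Longrightarrow> cyc c (x+1) \<noteq> x"
proof -
  assume c: "c \<ge> 2" and x: "x \<in> {1..c}"
  have e: "cyc c (x+1) = x mod c + 1" unfolding cyc_def by simp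
  show ?thesis
  proof (cases "x = c")
    case True then show ?thesis using e c by simp
  next
    case False then have "x < c" using x by simp
    then show ?thesis using e by simp
  qed
qed

lemma cyc_ne2: "c \<ge> 3 \<Longrightarrow> x \<in> {1..c} \<Longrightarrow> cyc c (x+2) \<noteq> x"
proof -
  assume c: "c \<ge> 3" and x: "x \<in> {1..c}"
  have e: "cyc c (x+2) = (x+1) mod c + 1" unfolding cyc_def by simp
  have "x + 1 = c \<or> x = c \<or> x + 1 < c" using x by auto
  moreover
  { assume "x + 1 = c" then have "cyc c (x+2) = 1" using e by simp
    then have ?thesis using \<open>x + 1 = c\<close> c by simp }
  moreover
  { assume h: "x = c"
    have "(c + 1) mod c = 1" using c by (simp add: mod_Suc)
    then have "cyc c (x+2) = 2" using e h by simp
    then have ?thesis using h c by simp }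
  moreover
  { assume "x + 1 < c" then have ?thesis using e by simp }
  ultimately show ?thesis by blast
qed

lemma cyc_cyc: "c > 0 \<Longrightarrow> k \<ge> 1 \<Longrightarrow> cyc c (cyc c k + 1) = cyc c (k+1)"
proof -
  assume "c > 0" "k \<ge> 1"
  have "((k - 1) mod c + 1) mod c = Suc (k-1) mod c" by (simp add: mod_Suc_eq)
  then show ?thesis
    using \<open>k \<ge> 1\<close> unfolding cyc_def by simp
qed

lemma member_at_prop:
  assumes b: "bij_betw (\<lambda>i. I i j) (Cset N R j) {1..card (Cset N R j)}"
    and c: "card (Cset N R j) > 0"
  shows "member_at N R I j k \<in> Cset N R j \<and> I (member_at N R I j k) j = cyc (card (Cset N R j)) k"
proof -
  let ?c = "card (Cset N R j)"
  have "cyc ?c k \<in> {1..?c}" using c by (rule cyc_range)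
  hence "cyc ?c k \<in> (\<lambda>i. I i j) ` Cset N R j" using b by (simp add: bij_betw_def)
  then obtain i where i: "i \<in> Cset N R j" "I i j = cyc ?c k" by (auto elim!: imageE)
  have u: "\<And>i'. i' \<in> Cset N R j \<and> I i' j = cyc ?c k \<Longrightarrow> i' = i"
  proof -
    fix i' assume h: "i' \<in> Cset N R j \<and> I i' j = cyc ?c k"
    have inj: "inj_on (\<lambda>i. I i j) (Cset N R j)" using b by (simp add: bij_betw_def)
    show "i' = i" using inj_onD[OF inj, of i' i] h i by simp
  qed
  have "(THE x. x \<in> Cset N R j \<and> I x j = cyc ?c k) = i"
    by (rule the_equality) (use i u in blast)+
  thus ?thesis unfolding member_at_def using i by simp
qed

theorem claim2:
  fixes N :: nat and R :: "nat \<Rightarrow> nat set" and I :: "nat \<Rightarrow> nat \<Rightarrow> nat"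
    and A :: "nat \<Rightarrow> real set" and u :: "nat \<Rightarrow> (nat \<Rightarrow> real) \<Rightarrow> real"
    and ma mp :: "nat \<Rightarrow> nat \<Rightarrow> real"
  assumes "N \<ge> 1"
    and "\<forall>i\<in>{1..N}. R i \<subseteq> {1..N} \<and> i \<in> R i"
    and "\<forall>j\<in>{1..N}. card (Cset N R j) \<ge> 3"
    and "\<forall>j\<in>{1..N}. bij_betw (\<lambda>i. I i j) (Cset N R j) {1..card (Cset N R j)}"
    and "\<forall>i\<in>{1..N}. convex (A i) \<and> compact (A i) \<and> A i \<noteq> {} \<and> 0 \<in> A i"
    and "\<forall>i\<in>{1..N}. \<forall>a b. (\<forall>j\<in>R i. a j = b j) \<longrightarrow> u i a = u i b"
    and "\<forall>i\<in>{1..N}. concave_fun_on {a. a i \<in> A i} (u i)"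
    and "is_NE N R I A u ma mp"
  shows "(\<forall>i\<in>{1..N}. \<forall>j\<in>R i.
            mp i j * (ma i j - ma (nxt N R I i j) j)^2 = 0 \<and>
            mp (nxt N R I i j) j * (ma (nxt N R I i j) j - ma (nxt2 N R I i j) j)^2 = 0)
       \<and> (\<forall>i\<in>{1..N}. that N R I ma mp i = (\<Sum>j\<in>R i. lij N R I mp i j * ahat N R ma j))"
proof -
  note A2 = assms(2) and A3 = assms(3) and A4 = assms(4) and A5 = assms(5)
  have NE1: "\<forall>k\<in>{1..N}. msg_ok R k (mp k)" and
    NE2: "\<forall>i\<in>{1..N}. \<forall>a' p'. msg_ok R i p' \<longrightarrow>
         uA A u i (ahat N R (ma(i := a'))) (that N R I (ma(i := a')) (mp(i := p')) i)
           \<le> uA A u i (ahat N R ma) (that N R I ma mp i)"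
    using assms(8) unfolding is_NE_def by auto
  have facts: "nxt N R I i j \<in> Cset N R j \<and> nxt N R I i j \<noteq> i \<and> nxt2 N R I i j \<noteq> i
      \<and> nxt N R I (nxt N R I i j) j = nxt2 N R I i j"
    if i: "i \<in> {1..N}" and j: "j \<in> R i" for i j
  proof -
    let ?c = "card (Cset N R j)"
    have jN: "j \<in> {1..N}" using A2 i j by blast
    have c3: "?c \<ge> 3" using A3 jN by auto
    have b: "bij_betw (\<lambda>i. I i j) (Cset N R j) {1..?c}" using A4 jN by auto
    have iC: "i \<in> Cset N R j" using i j unfolding Cset_def by auto
    have Ii: "I i j \<in> {1..?c}" using b iC unfolding bij_betw_def by auto
    have m1: "nxt N R I i j \<in> Cset N R j \<and> I (nxt N R I i j) j = cyc ?c (I i j + 1)"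
      unfolding nxt_def using member_at_prop[of I j N R, OF b] c3 by auto
    have m2: "I (nxt2 N R I i j) j = cyc ?c (I i j + 2)"
      unfolding nxt2_def using member_at_prop[of I j N R, OF b] c3 by auto
    have ne1: "nxt N R I i j \<noteq> i" using m1 cyc_ne1[OF _ Ii] c3 by auto
    have ne2: "nxt2 N R I i j \<noteq> i" using m2 cyc_ne2[OF _ Ii] c3 by auto
    have "nxt N R I (nxt N R I i j) j = member_at N R I j (cyc ?c (I i j + 1) + 1)"
      using m1 unfolding nxt_def by simp
    also have "\<dots> = member_at N R I j (I i j + 2)"
      unfolding member_at_def using cyc_cyc[of ?c "I i j + 1"] c3
      by (simp add: numeral_2_eq_2)
    finally show ?thesis using m1 ne1 ne2 unfolding nxt2_def by simp
  qed
  have P: "\<forall>j\<in>R i. mp i j * (ma i j - ma (nxt N R I i j) j)^2 = 0" if i: "i \<in> {1..N}" for i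
  proof -
    have fin: "finite (R i)" using A2 i by (meson finite_atLeastAtMost finite_subset)
    have iC: "i \<in> Cset N R i" using A2 i unfolding Cset_def by auto
    have cpos: "card (Cset N R i) > 0" using iC Cset_fin card_gt_0_iff by blast
    have feas: "ahat N R ma i \<in> A i"
    proof (rule ccontr)
      assume nf: "ahat N R ma i \<notin> A i"
      define a' where "a' = (ma i)(i := ma i i - real (card (Cset N R i)) * ahat N R ma i)"
      have "(\<Sum>k\<in>Cset N R i. (ma(i := a')) k i) = (\<Sum>k\<in>Cset N R i. ma k i) - real (card (Cset N R i)) * ahat N R ma i"
        using iC Cset_fin[of N R i]
        by (simp add: sum.remove[of "Cset N R i" i] a'_def sum.cong[of "Cset N R i - {i}" _ "\<lambda>k. (ma(i := a')) k i" "\<lambda>k. ma k i"])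
      also have "\<dots> = 0" using cpos unfolding ahat_def by simp
      finally have "ahat N R (ma(i := a')) i = 0" unfolding ahat_def by simp
      hence "uA A u i (ahat N R (ma(i := a'))) (that N R I (ma(i := a')) (mp(i := mp i)) i) \<noteq> -\<infinity>"
        using A5 i unfolding uA_def by auto
      moreover have "uA A u i (ahat N R ma) (that N R I ma mp i) = -\<infinity>"
        using nf unfolding uA_def by auto
      moreover have "msg_ok R i (mp i)" using NE1 i by auto
      ultimately show False using NE2[rule_format, OF i, of "mp i" a'] by simp
    qed
    let ?p = "mp(i := (\<lambda>j. 0))"
    let ?S = "(\<Sum>j\<in>R i. mp i j * (ma i j - ma (nxt N R I i j) j)^2)"
    have "that N R I ma ?p i = (\<Sum>j\<in>R i. lij N R I mp i j * ahat N R ma j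
        - mp (nxt N R I i j) j * (ma (nxt N R I i j) j - ma (nxt2 N R I i j) j)^2)"
      unfolding that_def lij_def using facts[OF i] by (intro sum.cong) auto
    also have "\<dots> = that N R I ma mp i - ?S"
      unfolding that_def by (simp add: sum_subtractf sum.distrib)
    finally have tp: "that N R I ma ?p i = that N R I ma mp i - ?S" .
    have "uA A u i (ahat N R (ma(i := ma i))) (that N R I (ma(i := ma i)) ?p i)
           \<le> uA A u i (ahat N R ma) (that N R I ma mp i)"
    proof -
      have mo: "msg_ok R i (\<lambda>j. 0)" by (simp add: msg_ok_def)
      show ?thesis by (rule NE2[rule_format, OF i mo])
    qed
    hence "?S \<le> 0" using feas tp unfolding uA_def by simp
    moreover have nn: "\<forall>j\<in>R i. mp i j * (ma i j - ma (nxt N R I i j) j)^2 \<ge> 0"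
      using NE1 i unfolding msg_ok_def by auto
    moreover have "?S \<ge> 0" using nn by (intro sum_nonneg) auto
    ultimately have "?S = 0" by linarith
    thus ?thesis using sum_nonneg_eq_0_iff[OF fin, of "\<lambda>j. mp i j * (ma i j - ma (nxt N R I i j) j)^2"] nn by blast
  qed
  have part1: "\<forall>i\<in>{1..N}. \<forall>j\<in>R i.
            mp i j * (ma i j - ma (nxt N R I i j) j)^2 = 0 \<and>
            mp (nxt N R I i j) j * (ma (nxt N R I i j) j - ma (nxt2 N R I i j) j)^2 = 0"
  proof (intro ballI conjI)
    fix i j assume i: "i \<in> {1..N}" and j: "j \<in> R i"
    show "mp i j * (ma i j - ma (nxt N R I i j) j)^2 = 0" using P i j by auto
    have f: "nxt N R I i j \<in> Cset N R j" "nxt N R I (nxt N R I i j) j = nxt2 N R I i j"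
      using facts[OF i j] by auto
    hence g: "nxt N R I i j \<in> {1..N}" "j \<in> R (nxt N R I i j)" unfolding Cset_def by auto
    show "mp (nxt N R I i j) j * (ma (nxt N R I i j) j - ma (nxt2 N R I i j) j)^2 = 0"
      using bspec[OF P[OF g(1)] g(2)] f(2) by simp
  qed
  moreover have "\<forall>i\<in>{1..N}. that N R I ma mp i = (\<Sum>j\<in>R i. lij N R I mp i j * ahat N R ma j)"
  proof (intro ballI)
    fix i assume i: "i \<in> {1..N}"
    show "that N R I ma mp i = (\<Sum>j\<in>R i. lij N R I mp i j * ahat N R ma j)"
      unfolding that_def
    proof (rule sum.cong)
      fix j assume j: "j \<in> R i"
      have z: "mp i j * (ma i j - ma (nxt N R I i j) j)^2 = 0"
           "mp (nxt N R I i j) j * (ma (nxt N R I i j) j - ma (nxt2 N R I i j) j)^2 = 0"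
        using bspec[OF bspec[OF part1 i] j] by auto
      show "lij N R I mp i j * ahat N R ma j + mp i j * (ma i j - ma (nxt N R I i j) j)^2
          - mp (nxt N R I i j) j * (ma (nxt N R I i j) j - ma (nxt2 N R I i j) j)^2
          = lij N R I mp i j * ahat N R ma j"
        by (simp only: z)
    qed simp
  qed
  ultimately show ?thesis by blast
qed

end
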